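(* Assume that the spectra $\Lambda_N[T]$, $\Lambda_D[T]$, $\Lambda_{M_1}[T]$, $\Lambda_{M_2}[T]$, $\Lambda_P[2T]$, $\Lambda_A[2T]$, $\Lambda_N[2T]$, $\Lambda_D[2T]$, $\Lambda_P[4T]$ are all nonempty, that each has a first (smallest) eigenvalue, that this first eigenvalue is simple, and that its eigenfunction has constant sign. Denote these first eigenvalues by $\lambda_0^N[T]$, $\lambda_0^D[T]$, $\lambda_0^{M_1}[T]$, $\lambda_0^{M_2}[T]$, $\lambda_0^P[2T]$, $\lambda_0^A[2T]$, $\lambda_0^N[2T]$, $\lambda_0^D[2T]$, $\lambda_0^P[4T]$. Then, for any $a_0,\dots,a_{2n-1}\in L^1(I)$: 1. $\lambda_0^N[T]=\lambda_0^P[2T]<\lambda_0^D[T]$; 2. $\lambda_0^N[T]=\lambda_0^N[2T]<\lambda_0^{M_1}[T]$; 3. $\lambda_0^N[T]=\lambda_0^P[4T]$; 4. $\lambda_0^{M_2}[T]=\lambda_0^D[2T]<\lambda_0^D[T]$; 5. $\lambda_0^N[T]<\lambda_0^{M_2}[T]$; 6. $\lambda_0^A[2T]=\min\{\lambda_0^{M_1}[T],\lambda_0^{M_2}[T]\}$.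
   Context: Fix $n\ge 1$, $T>0$, $I=[0,T]$, $J=[0,2T]$. $W^{2n,1}(K)$: $u\in C^{2n-1}(K)$ with $u^{(2n-1)}$ absolutely continuous. Let $a_0,\dots,a_{2n-1}$ be integrable on $I$, $Lu=u^{(2n)}+\sum_{k=0}^{2n-1}a_ku^{(k)}$ on $I$. $\widetilde L u=u^{(2n)}+\sum_{k=0}^{n-1}(\hat a_{2k+1}u^{(2k+1)}+\tilde a_{2k}u^{(2k)})$ on $J$, where $\tilde a_{2k}=a_{2k}$, $\hat a_{2k+1}=a_{2k+1}$ on $I$, and $\tilde a_{2k}(t)=a_{2k}(2T-t)$, $\hat a_{2k+1}(t)=-a_{2k+1}(2T-t)$ for $t\in(T,2T]$; $\widetilde{\widetilde L}$ on $[0,4T]$ is obtained by the same construction from $\widetilde L$ (reflection about $2T$). For an operator $M$, $M[\lambda]u=Mu+\lambda u$; $\lambda$ is an eigenvalue of $M$ on $X$ if $M[\lambda]u=0$ a.e. has a nontrivial solution $u\in X$ (an eigenfunction). Spaces ($k=0,\dots,n-1$ unless stated): $X_{N,T}$: $u^{(2k+1)}(0)=u^{(2k+1)}(T)=0$; $X_{D,T}$: $u^{(2k)}(0)=u^{(2k)}(T)=0$; $X_{M_1,T}$: $u^{(2k+1)}(0)=u^{(2k)}(T)=0$; $X_{M_2,T}$: $u^{(2k)}(0)=u^{(2k+1)}(T)=0$ (in $W^{2n,1}(I)$); $X_{P,2T}$: $u^{(k)}(0)=u^{(k)}(2T)$, $k=0,\dots,2n-1$; $X_{A,2T}$: $u^{(k)}(0)=-u^{(k)}(2T)$,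 $k=0,\dots,2n-1$; $X_{N,2T}$: $u^{(2k+1)}(0)=u^{(2k+1)}(2T)=0$; $X_{D,2T}$: $u^{(2k)}(0)=u^{(2k)}(2T)=0$ (in $W^{2n,1}(J)$); $X_{P,4T}$: $u^{(k)}(0)=u^{(k)}(4T)$, $k=0,\dots,2n-1$. $\Lambda_N[T],\Lambda_D[T],\Lambda_{M_1}[T],\Lambda_{M_2}[T]$ are the eigenvalue sets of $L$ on $X_{N,T},X_{D,T},X_{M_1,T},X_{M_2,T}$; $\Lambda_P[2T],\Lambda_A[2T],\Lambda_N[2T],\Lambda_D[2T]$ those of $\widetilde L$ on $X_{P,2T},X_{A,2T},X_{N,2T},X_{D,2T}$; $\Lambda_P[4T]$ that of $\widetilde{\widetilde L}$ on $X_{P,4T}$. *)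

theory Defs
  imports "HOL-Analysis.Analysis"
begin

definition abs_cont_on :: "real \<Rightarrow> real \<Rightarrow> (real \<Rightarrow> real) \<Rightarrow> bool" where
  "abs_cont_on a b f \<longleftrightarrow>
     (\<forall>e>0. \<exists>d>0. \<forall>(N::nat) (l::nat \<Rightarrow> real) (r::nat \<Rightarrow> real).
        (\<forall>i<N. a \<le> l i \<and> l i \<le> r i \<and> r i \<le> b) \<and>
        (\<forall>i<N. \<forall>j<N. i \<noteq> j \<longrightarrow> r i \<le> l j \<or> r j \<le> l i) \<and>
        (\<Sum>i<N. r i - l i) < d
        \<longrightarrow> (\<Sum>i<N. \<bar>f (r i) - f (l i)\<bar>) < e)"

text \<open>D is the family of derivatives u, u', ..., u^(m-1) of a function in W^{m,1}([a,b]):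
  D 0 = u, D (k+1) is the derivative of D k on [a,b] for k < m-1, and D (m-1) is absolutely
  continuous on [a,b].  D m is meant to be the a.e. derivative of D (m-1).\<close>
definition W_derivs :: "nat \<Rightarrow> real \<Rightarrow> real \<Rightarrow> (real \<Rightarrow> real) \<Rightarrow> (nat \<Rightarrow> real \<Rightarrow> real) \<Rightarrow> bool" where
  "W_derivs m a b u D \<longleftrightarrow>
     (\<forall>t\<in>{a..b}. D 0 t = u t) \<and>
     (\<forall>k. Suc k < m \<longrightarrow> (\<forall>t\<in>{a..b}. (D k has_real_derivative D (Suc k) t) (at t within {a..b}))) \<and>
     abs_cont_on a b (D (m - 1))"

definition eigfun :: "nat \<Rightarrow> (nat \<Rightarrow> real \<Rightarrow> real) \<Rightarrow> real \<Rightarrow> real \<Rightarrow>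
    ((nat \<Rightarrow> real \<Rightarrow> real) \<Rightarrow> bool) \<Rightarrow> real \<Rightarrow> (real \<Rightarrow> real) \<Rightarrow> bool" where
  "eigfun m c a b BC lam u \<longleftrightarrow>
     (\<exists>D. W_derivs m a b u D \<and> BC D \<and>
          (AE t in lebesgue_on {a..b}.
              (D (m - 1) has_real_derivative D m t) (at t within {a..b}) \<and>
              D m t + (\<Sum>k<m. c k t * D k t) + lam * D 0 t = 0)) \<and>
     (\<exists>t\<in>{a..b}. u t \<noteq> 0)"

definition spec :: "nat \<Rightarrow> (nat \<Rightarrow> real \<Rightarrow> real) \<Rightarrow> real \<Rightarrow> real \<Rightarrow>
    ((nat \<Rightarrow> real \<Rightarrow> real) \<Rightarrow> bool) \<Rightarrow> real set" where
  "spec m c a b BC = {lam. \<exists>u. eigfun m c a b BC lam u}"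

definition first_eig :: "nat \<Rightarrow> (nat \<Rightarrow> real \<Rightarrow> real) \<Rightarrow> real \<Rightarrow> real \<Rightarrow>
    ((nat \<Rightarrow> real \<Rightarrow> real) \<Rightarrow> bool) \<Rightarrow> real \<Rightarrow> bool" where
  "first_eig m c a b BC l \<longleftrightarrow>
     l \<in> spec m c a b BC \<and> (\<forall>x\<in>spec m c a b BC. l \<le> x) \<and>
     (\<exists>u. eigfun m c a b BC l u \<and>
          (\<forall>v. eigfun m c a b BC l v \<longrightarrow> (\<exists>s::real. \<forall>t\<in>{a..b}. v t = s * u t))) \<and>
     (\<forall>u. eigfun m c a b BC l u \<longrightarrow>
          (\<forall>t\<in>{a..b}. 0 \<le> u t) \<or> (\<forall>t\<in>{a..b}. u t \<le> 0))"

text \<open>Boundary conditions (n = half the order).\<close>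
definition bcN :: "nat \<Rightarrow> real \<Rightarrow> real \<Rightarrow> (nat \<Rightarrow> real \<Rightarrow> real) \<Rightarrow> bool" where
  "bcN n a b D \<longleftrightarrow> (\<forall>k<n. D (2*k+1) a = 0 \<and> D (2*k+1) b = 0)"
definition bcD :: "nat \<Rightarrow> real \<Rightarrow> real \<Rightarrow> (nat \<Rightarrow> real \<Rightarrow> real) \<Rightarrow> bool" where
  "bcD n a b D \<longleftrightarrow> (\<forall>k<n. D (2*k) a = 0 \<and> D (2*k) b = 0)"
definition bcM1 :: "nat \<Rightarrow> real \<Rightarrow> real \<Rightarrow> (nat \<Rightarrow> real \<Rightarrow> real) \<Rightarrow> bool" where
  "bcM1 n a b D \<longleftrightarrow> (\<forall>k<n. D (2*k+1) a = 0 \<and> D (2*k) b = 0)"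
definition bcM2 :: "nat \<Rightarrow> real \<Rightarrow> real \<Rightarrow> (nat \<Rightarrow> real \<Rightarrow> real) \<Rightarrow> bool" where
  "bcM2 n a b D \<longleftrightarrow> (\<forall>k<n. D (2*k) a = 0 \<and> D (2*k+1) b = 0)"
definition bcP :: "nat \<Rightarrow> real \<Rightarrow> real \<Rightarrow> (nat \<Rightarrow> real \<Rightarrow> real) \<Rightarrow> bool" where
  "bcP n a b D \<longleftrightarrow> (\<forall>k<2*n. D k a = D k b)"
definition bcA :: "nat \<Rightarrow> real \<Rightarrow> real \<Rightarrow> (nat \<Rightarrow> real \<Rightarrow> real) \<Rightarrow> bool" where
  "bcA n a b D \<longleftrightarrow> (\<forall>k<2*n. D k a = - D k b)"

text \<open>Reflection of the coefficients about S: on [0,S] unchanged, for t in (S,2S] the coefficient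
  of u^(k) becomes (-1)^k c_k(2S - t).  This is the construction of L-tilde (S = T) and of
  L-tilde-tilde (S = 2T, applied to the coefficients of L-tilde).\<close>
definition reflect :: "real \<Rightarrow> (nat \<Rightarrow> real \<Rightarrow> real) \<Rightarrow> nat \<Rightarrow> real \<Rightarrow> real" where
  "reflect S c k t = (if t \<le> S then c k t else (-1) ^ k * c k (2 * S - t))"

end

theory Submission
  imports Defs
begin

lemma abs_contE:
  assumes "abs_cont_on a b f" "e > 0"
  obtains d where "d > 0" "\<forall>(N::nat) (l::nat \<Rightarrow> real) (r::nat \<Rightarrow> real).
        (\<forall>i<N. a \<le> l i \<and> l i \<le> r i \<and> r i \<le> b) \<and>
        (\<forall>i<N. \<forall>j<N. i \<noteq> j \<longrightarrow> r i \<le> l j \<or> r j \<le> l i) \<and>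
        (\<Sum>i<N. r i - l i) < d
        \<longrightarrow> (\<Sum>i<N. \<bar>f (r i) - f (l i)\<bar>) < e"
proof -
  have h0: "\<forall>e>0. \<exists>d>0. \<forall>(N::nat) (l::nat \<Rightarrow> real) (r::nat \<Rightarrow> real).
        (\<forall>i<N. a \<le> l i \<and> l i \<le> r i \<and> r i \<le> b) \<and>
        (\<forall>i<N. \<forall>j<N. i \<noteq> j \<longrightarrow> r i \<le> l j \<or> r j \<le> l i) \<and>
        (\<Sum>i<N. r i - l i) < d
        \<longrightarrow> (\<Sum>i<N. \<bar>f (r i) - f (l i)\<bar>) < e" using assms(1) unfolding abs_cont_on_def .
  have "\<exists>d>0. \<forall>(N::nat) (l::nat \<Rightarrow> real) (r::nat \<Rightarrow> real).
        (\<forall>i<N. a \<le> l i \<and> l i \<le> r i \<and> r i \<le> b) \<and>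
        (\<forall>i<N. \<forall>j<N. i \<noteq> j \<longrightarrow> r i \<le> l j \<or> r j \<le> l i) \<and>
        (\<Sum>i<N. r i - l i) < d
        \<longrightarrow> (\<Sum>i<N. \<bar>f (r i) - f (l i)\<bar>) < e" using mp[OF spec[OF h0, of e] assms(2)] .
  then obtain d where "d > 0" "\<forall>(N::nat) (l::nat \<Rightarrow> real) (r::nat \<Rightarrow> real).
        (\<forall>i<N. a \<le> l i \<and> l i \<le> r i \<and> r i \<le> b) \<and>
        (\<forall>i<N. \<forall>j<N. i \<noteq> j \<longrightarrow> r i \<le> l j \<or> r j \<le> l i) \<and>
        (\<Sum>i<N. r i - l i) < d
        \<longrightarrow> (\<Sum>i<N. \<bar>f (r i) - f (l i)\<bar>) < e" by (elim exE conjE)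
  then show ?thesis by (rule that)
qed


lemma deriv_glue:
  fixes f1 f2 :: "real \<Rightarrow> real"
  assumes "a \<le> q" "q \<le> b" "t \<in> {a..b}"
    and h1: "t \<le> q \<Longrightarrow> (f1 has_real_derivative d1) (at t within {a..q})"
    and h2: "q \<le> t \<Longrightarrow> (f2 has_real_derivative d2) (at t within {q..b})"
    and eq: "f1 q = f2 q" and deq: "t = q \<Longrightarrow> d1 = d2"
  shows "((\<lambda>x. if x \<le> q then f1 x else f2 x) has_real_derivative (if t \<le> q then d1 else d2)) (at t within {a..b})"
proof -
  let ?g = "\<lambda>x. if x \<le> q then f1 x else f2 x"
  let ?d = "if t \<le> q then d1 else d2"
  have U: "{a..b} = {a..q} \<union> {q..b}" using assms(1,2) by auto
  have A: "(?g has_real_derivative ?d) (at t within {a..q})"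
  proof (cases "t \<le> q")
    case True
    have "(f1 has_real_derivative ?d) (at t within {a..q})" using h1[OF True] True by simp
    then show ?thesis
      by (rule has_field_derivative_transform_within[OF _ zero_less_one]) (use assms True eq in auto)
  next
    case False
    have "\<not> t islimpt {a..q}"
    proof
      assume "t islimpt {a..q}"
      then have "t \<in> closure {a..q}" by (simp add: closure_def)
      then show False using False by simp
    qed
    then have "at t within {a..q} = bot" using trivial_limit_within by blast
    then show ?thesis unfolding has_field_derivative_iff by simp
  qed
  have B: "(?g has_real_derivative ?d) (at t within {q..b})"
  proof (cases "q \<le> t")
    case True
    have "(f2 has_real_derivative ?d) (at t within {q..b})"
      using h2[OF True] deq True by (cases "t \<le> q") auto
    then show ?thesis
      by (rule has_field_derivative_transform_within[OF _ zero_less_one]) (use assms True eq in auto)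
  next
    case False
    have "\<not> t islimpt {q..b}"
    proof
      assume "t islimpt {q..b}"
      then have "t \<in> closure {q..b}" by (simp add: closure_def)
      then show False using False by simp
    qed
    then have "at t within {q..b} = bot" using trivial_limit_within by blast
    then show ?thesis unfolding has_field_derivative_iff by simp
  qed
  show ?thesis using A B unfolding U has_field_derivative_iff Lim_within_Un by blast
qed

lemma abs_cont_restrict:
  assumes "abs_cont_on a b f" "a \<le> a'" "b' \<le> b"
  shows "abs_cont_on a' b' f"
  unfolding abs_cont_on_def
proof (intro allI impI)
  fix e :: real assume "e > 0"
  obtain d where d: "d > 0" "\<forall>(N::nat) (l::nat \<Rightarrow> real) (r::nat \<Rightarrow> real).
        (\<forall>i<N. a \<le> l i \<and> l i \<le> r i \<and> r i \<le> b) \<and>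
        (\<forall>i<N. \<forall>j<N. i \<noteq> j \<longrightarrow> r i \<le> l j \<or> r j \<le> l i) \<and>
        (\<Sum>i<N. r i - l i) < d
        \<longrightarrow> (\<Sum>i<N. \<bar>f (r i) - f (l i)\<bar>) < e"
    by (rule abs_contE[OF assms(1) \<open>e > 0\<close>])
  show "\<exists>d>0. \<forall>(N::nat) (l::nat \<Rightarrow> real) (r::nat \<Rightarrow> real).
        (\<forall>i<N. a' \<le> l i \<and> l i \<le> r i \<and> r i \<le> b') \<and>
        (\<forall>i<N. \<forall>j<N. i \<noteq> j \<longrightarrow> r i \<le> l j \<or> r j \<le> l i) \<and>
        (\<Sum>i<N. r i - l i) < d
        \<longrightarrow> (\<Sum>i<N. \<bar>f (r i) - f (l i)\<bar>) < e"
  proof (rule exI[of _ d], rule conjI, simp add: d, intro allI impI)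
    fix N :: nat and l r :: "nat \<Rightarrow> real"
    assume h: "(\<forall>i<N. a' \<le> l i \<and> l i \<le> r i \<and> r i \<le> b') \<and>
        (\<forall>i<N. \<forall>j<N. i \<noteq> j \<longrightarrow> r i \<le> l j \<or> r j \<le> l i) \<and>
        (\<Sum>i<N. r i - l i) < d"
    have "\<forall>i<N. a \<le> l i \<and> l i \<le> r i \<and> r i \<le> b" using h assms(2,3) by force
    then show "(\<Sum>i<N. \<bar>f (r i) - f (l i)\<bar>) < e" using h d(2) by blast
  qed
qed

lemma abs_cont_neg:
  assumes "abs_cont_on a b f"
  shows "abs_cont_on a b (\<lambda>t. - f t)"
proof -
  have h: "\<And>x y::real. \<bar>- x - - y\<bar> = \<bar>x - y\<bar>" by linarith
  show ?thesis using assms unfolding abs_cont_on_def h .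
qed

lemma abs_cont_reflect:
  assumes "abs_cont_on a b f"
  shows "abs_cont_on (\<sigma> - b) (\<sigma> - a) (\<lambda>t. f (\<sigma> - t))"
  unfolding abs_cont_on_def
proof (intro allI impI)
  fix e :: real assume "e > 0"
  obtain d where d: "d > 0" "\<forall>(N::nat) (l::nat \<Rightarrow> real) (r::nat \<Rightarrow> real).
        (\<forall>i<N. a \<le> l i \<and> l i \<le> r i \<and> r i \<le> b) \<and>
        (\<forall>i<N. \<forall>j<N. i \<noteq> j \<longrightarrow> r i \<le> l j \<or> r j \<le> l i) \<and>
        (\<Sum>i<N. r i - l i) < d
        \<longrightarrow> (\<Sum>i<N. \<bar>f (r i) - f (l i)\<bar>) < e"
    by (rule abs_contE[OF assms(1) \<open>e > 0\<close>])
  show "\<exists>d>0. \<forall>(N::nat) (l::nat \<Rightarrow> real) (r::nat \<Rightarrow> real).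
        (\<forall>i<N. \<sigma> - b \<le> l i \<and> l i \<le> r i \<and> r i \<le> \<sigma> - a) \<and>
        (\<forall>i<N. \<forall>j<N. i \<noteq> j \<longrightarrow> r i \<le> l j \<or> r j \<le> l i) \<and>
        (\<Sum>i<N. r i - l i) < d
        \<longrightarrow> (\<Sum>i<N. \<bar>f (\<sigma> - r i) - f (\<sigma> - l i)\<bar>) < e"
  proof (rule exI[of _ d], rule conjI, simp add: d, intro allI impI)
    fix N :: nat and l r :: "nat \<Rightarrow> real"
    assume h: "(\<forall>i<N. \<sigma> - b \<le> l i \<and> l i \<le> r i \<and> r i \<le> \<sigma> - a) \<and>
        (\<forall>i<N. \<forall>j<N. i \<noteq> j \<longrightarrow> r i \<le> l j \<or> r j \<le> l i) \<and>
        (\<Sum>i<N. r i - l i) < d"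
    have "(\<Sum>i<N. \<bar>f (\<sigma> - l i) - f (\<sigma> - r i)\<bar>) < e"
    proof (rule d(2)[rule_format], intro conjI)
      show "\<forall>i<N. a \<le> \<sigma> - r i \<and> \<sigma> - r i \<le> \<sigma> - l i \<and> \<sigma> - l i \<le> b"
        using h by force
      show "\<forall>i<N. \<forall>j<N. i \<noteq> j \<longrightarrow> \<sigma> - l i \<le> \<sigma> - r j \<or> \<sigma> - l j \<le> \<sigma> - r i"
        using h by force
      have "(\<Sum>i<N. (\<sigma> - l i) - (\<sigma> - r i)) = (\<Sum>i<N. r i - l i)" by simp
      then show "(\<Sum>i<N. (\<sigma> - l i) - (\<sigma> - r i)) < d" using h by linarith
    qed
    then show "(\<Sum>i<N. \<bar>f (\<sigma> - r i) - f (\<sigma> - l i)\<bar>) < e"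
      by (simp add: abs_minus_commute)
  qed
qed

lemma abs_cont_glue:
  assumes "abs_cont_on a q f1" "abs_cont_on q b f2" "f1 q = f2 q" and aq: "a \<le> q" and qb: "q \<le> b"
  shows "abs_cont_on a b (\<lambda>t. if t \<le> q then f1 t else f2 t)"
  unfolding abs_cont_on_def
proof (intro allI impI)
  let ?g = "\<lambda>t. if t \<le> q then f1 t else f2 t"
  fix e :: real assume "e > 0"
  then have e2: "e/2 > 0" by simp
  obtain d1 where d1: "d1 > 0" "\<forall>(N::nat) (l::nat \<Rightarrow> real) (r::nat \<Rightarrow> real).
        (\<forall>i<N. a \<le> l i \<and> l i \<le> r i \<and> r i \<le> q) \<and>
        (\<forall>i<N. \<forall>j<N. i \<noteq> j \<longrightarrow> r i \<le> l j \<or> r j \<le> l i) \<and>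
        (\<Sum>i<N. r i - l i) < d1
        \<longrightarrow> (\<Sum>i<N. \<bar>f1 (r i) - f1 (l i)\<bar>) < e/2"
    by (rule abs_contE[OF assms(1) e2])
  obtain d2 where d2: "d2 > 0" "\<forall>(N::nat) (l::nat \<Rightarrow> real) (r::nat \<Rightarrow> real).
        (\<forall>i<N. q \<le> l i \<and> l i \<le> r i \<and> r i \<le> b) \<and>
        (\<forall>i<N. \<forall>j<N. i \<noteq> j \<longrightarrow> r i \<le> l j \<or> r j \<le> l i) \<and>
        (\<Sum>i<N. r i - l i) < d2
        \<longrightarrow> (\<Sum>i<N. \<bar>f2 (r i) - f2 (l i)\<bar>) < e/2"
    by (rule abs_contE[OF assms(2) e2])
  show "\<exists>d>0. \<forall>(N::nat) (l::nat \<Rightarrow> real) (r::nat \<Rightarrow> real).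
        (\<forall>i<N. a \<le> l i \<and> l i \<le> r i \<and> r i \<le> b) \<and>
        (\<forall>i<N. \<forall>j<N. i \<noteq> j \<longrightarrow> r i \<le> l j \<or> r j \<le> l i) \<and>
        (\<Sum>i<N. r i - l i) < d
        \<longrightarrow> (\<Sum>i<N. \<bar>?g (r i) - ?g (l i)\<bar>) < e"
  proof (rule exI[of _ "min d1 d2"], rule conjI, simp add: d1 d2, intro allI impI)
    fix N :: nat and l r :: "nat \<Rightarrow> real"
    assume h: "(\<forall>i<N. a \<le> l i \<and> l i \<le> r i \<and> r i \<le> b) \<and>
        (\<forall>i<N. \<forall>j<N. i \<noteq> j \<longrightarrow> r i \<le> l j \<or> r j \<le> l i) \<and>
        (\<Sum>i<N. r i - l i) < min d1 d2"
    have le1: "(\<Sum>i<N. min (r i) q - min (l i) q) \<le> (\<Sum>i<N. r i - l i)"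
      by (rule sum_mono) (use h in auto)
    have le2: "(\<Sum>i<N. max (r i) q - max (l i) q) \<le> (\<Sum>i<N. r i - l i)"
      by (rule sum_mono) (use h in auto)
    have A: "(\<Sum>i<N. \<bar>f1 (min (r i) q) - f1 (min (l i) q)\<bar>) < e/2"
    proof (rule d1(2)[rule_format], intro conjI)
      show "\<forall>i<N. a \<le> min (l i) q \<and> min (l i) q \<le> min (r i) q \<and> min (r i) q \<le> q"
        using h aq by (auto simp: min_def)
      show "\<forall>i<N. \<forall>j<N. i \<noteq> j \<longrightarrow> min (r i) q \<le> min (l j) q \<or> min (r j) q \<le> min (l i) q"
        using h by (meson min.mono order_refl)
      show "(\<Sum>i<N. min (r i) q - min (l i) q) < d1" using h le1 by linarith
    qed
    have B: "(\<Sum>i<N. \<bar>f2 (max (r i) q) - f2 (max (l i) q)\<bar>) < e/2"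
    proof (rule d2(2)[rule_format], intro conjI)
      show "\<forall>i<N. q \<le> max (l i) q \<and> max (l i) q \<le> max (r i) q \<and> max (r i) q \<le> b"
        using h qb by (auto simp: max_def)
      show "\<forall>i<N. \<forall>j<N. i \<noteq> j \<longrightarrow> max (r i) q \<le> max (l j) q \<or> max (r j) q \<le> max (l i) q"
        using h by (meson max.mono order_refl)
      show "(\<Sum>i<N. max (r i) q - max (l i) q) < d2" using h le2 by linarith
    qed
    have C: "\<bar>?g (r i) - ?g (l i)\<bar> \<le> \<bar>f1 (min (r i) q) - f1 (min (l i) q)\<bar> + \<bar>f2 (max (r i) q) - f2 (max (l i) q)\<bar>"
      if "i < N" for i
    proof -
      have lr: "l i \<le> r i" using h that by auto
      show ?thesis
      proof (cases "r i \<le> q")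
        case True then show ?thesis using lr by (simp add: min_def max_def)
      next
        case False
        show ?thesis
        proof (cases "l i \<le> q")
          case True
          then show ?thesis using False lr assms(3) by (simp add: min_def max_def)
        next
          case F2: False
          then show ?thesis using False lr by (simp add: min_def max_def)
        qed
      qed
    qed
    have "(\<Sum>i<N. \<bar>?g (r i) - ?g (l i)\<bar>) \<le> (\<Sum>i<N. \<bar>f1 (min (r i) q) - f1 (min (l i) q)\<bar> + \<bar>f2 (max (r i) q) - f2 (max (l i) q)\<bar>)"
      by (rule sum_mono) (use C in auto)
    also have "\<dots> < e" using A B by (simp add: sum.distrib)
    finally show "(\<Sum>i<N. \<bar>?g (r i) - ?g (l i)\<bar>) < e" .
  qed
qed



lemma lebesgue_on_AE_iff:
  "(AE t in lebesgue_on {a..b::real}. P t) \<longleftrightarrow> (AE t in lebesgue. t \<in> {a..b} \<longrightarrow> P t)"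
  by (rule AE_restrict_space_iff) simp

lemma AE_lebesgue_reflect:
  assumes "AE t in lebesgue. P t"
  shows "AE t in lebesgue. P (\<sigma> - t)"
proof -
  from assms[unfolded eventually_ae_filter] obtain N where N: "N \<in> null_sets lebesgue" "{x \<in> space lebesgue. \<not> P x} \<subseteq> N"
    by (elim bexE) (rule that)
  have "negligible N" using negligible_iff_null_sets[THEN iffD2, OF N(1)] .
  then have "negligible ((\<lambda>x. \<sigma> - x) ` N)"
    by (intro negligible_differentiable_image_negligible) (auto intro!: derivative_intros)
  then have "(\<lambda>x. \<sigma> - x) ` N \<in> null_sets lebesgue" using negligible_iff_null_sets[THEN iffD1] by blast
  moreover have "{x \<in> space lebesgue. \<not> P (\<sigma> - x)} \<subseteq> (\<lambda>x. \<sigma> - x) ` N"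
  proof
    fix x assume "x \<in> {x \<in> space lebesgue. \<not> P (\<sigma> - x)}"
    then have "\<sigma> - x \<in> N" using N(2) by auto
    then show "x \<in> (\<lambda>x. \<sigma> - x) ` N" by (rule rev_image_eqI) simp
  qed
  ultimately show ?thesis by (rule AE_I')
qed

lemma AE_lebesgue_neq: "AE t in lebesgue. t \<noteq> (x0::real)"
proof -
  have "{x0} \<in> null_sets lebesgue" using negligible_iff_null_sets[THEN iffD1, OF negligible_sing] .
  then show ?thesis by (rule AE_I') auto
qed

lemma refl_img: "(\<lambda>x. \<sigma> - x) ` {\<sigma> - b..\<sigma> - a} = {a..b::real}"
proof
  show "(\<lambda>x. \<sigma> - x) ` {\<sigma> - b..\<sigma> - a} \<subseteq> {a..b}" by auto
  show "{a..b} \<subseteq> (\<lambda>x. \<sigma> - x) ` {\<sigma> - b..\<sigma> - a}"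
  proof
    fix x assume "x \<in> {a..b}"
    then have "\<sigma> - x \<in> {\<sigma> - b..\<sigma> - a}" by auto
    moreover have "x = \<sigma> - (\<sigma> - x)" by simp
    ultimately show "x \<in> (\<lambda>x. \<sigma> - x) ` {\<sigma> - b..\<sigma> - a}" by (rule rev_image_eqI)
  qed
qed

lemma deriv_reflect:
  assumes "(f has_real_derivative d) (at (\<sigma> - t) within {a..b})"
  shows "((\<lambda>x. f (\<sigma> - x)) has_real_derivative (- d)) (at t within {\<sigma> - b..\<sigma> - a})"
proof -
  have "((\<lambda>x. \<sigma> - x) has_real_derivative -1) (at t within {\<sigma> - b..\<sigma> - a})"
    by (auto intro!: derivative_eq_intros)
  from DERIV_image_chain[OF _ this, of f d] assms show ?thesis by (simp add: refl_img o_def)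
qed



definition sol :: "nat \<Rightarrow> (nat \<Rightarrow> real \<Rightarrow> real) \<Rightarrow> real \<Rightarrow> real \<Rightarrow> real \<Rightarrow> (nat \<Rightarrow> real \<Rightarrow> real) \<Rightarrow> bool" where
  "sol m c a b lam D \<longleftrightarrow>
     (\<forall>k. Suc k < m \<longrightarrow> (\<forall>t\<in>{a..b}. (D k has_real_derivative D (Suc k) t) (at t within {a..b}))) \<and>
     abs_cont_on a b (D (m - 1)) \<and>
     (AE t in lebesgue_on {a..b}.
              (D (m - 1) has_real_derivative D m t) (at t within {a..b}) \<and>
              D m t + (\<Sum>k<m. c k t * D k t) + lam * D 0 t = 0)"

lemma eigfun_sol:
  "eigfun m c a b BC lam u \<longleftrightarrow>
    (\<exists>D. sol m c a b lam D \<and> (\<forall>t\<in>{a..b}. D 0 t = u t) \<and> BC D) \<and> (\<exists>t\<in>{a..b}. u t \<noteq> 0)"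
  unfolding eigfun_def sol_def W_derivs_def by blast

lemma sol_neg:
  assumes "sol m c a b lam D"
  shows "sol m c a b lam (\<lambda>k t. - D k t)"
proof -
  have A: "\<forall>k. Suc k < m \<longrightarrow> (\<forall>t\<in>{a..b}. ((\<lambda>x. - D k x) has_real_derivative - D (Suc k) t) (at t within {a..b}))"
    using assms unfolding sol_def by (auto intro!: DERIV_minus)
  have B: "abs_cont_on a b (\<lambda>x. - D (m - 1) x)"
    using assms unfolding sol_def by (auto intro!: abs_cont_neg)
  have "AE t in lebesgue_on {a..b}.
              (D (m - 1) has_real_derivative D m t) (at t within {a..b}) \<and>
              D m t + (\<Sum>k<m. c k t * D k t) + lam * D 0 t = 0"
    using assms unfolding sol_def by blast
  then have C: "AE t in lebesgue_on {a..b}.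
              ((\<lambda>x. - D (m - 1) x) has_real_derivative - D m t) (at t within {a..b}) \<and>
              - D m t + (\<Sum>k<m. c k t * - D k t) + lam * - D 0 t = 0"
  proof eventually_elim
    case (elim t)
    have "- D m t + (\<Sum>k<m. c k t * - D k t) + lam * - D 0 t = - (D m t + (\<Sum>k<m. c k t * D k t) + lam * D 0 t)"
      by (simp add: sum_negf)
    then show ?case using elim by (auto intro!: DERIV_minus)
  qed
  show ?thesis unfolding sol_def using A B C by simp
qed

lemma sol_restrict:
  assumes "sol m c a b lam D" "a \<le> a'" "b' \<le> b"
  shows "sol m c a' b' lam D"
proof -
  have sub: "{a'..b'} \<subseteq> {a..b}" using assms by auto
  have A: "\<forall>k. Suc k < m \<longrightarrow> (\<forall>t\<in>{a'..b'}. (D k has_real_derivative D (Suc k) t) (at t within {a'..b'}))"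
    using assms(1) sub unfolding sol_def by (meson DERIV_subset subsetD)
  have B: "abs_cont_on a' b' (D (m - 1))"
    using assms unfolding sol_def by (auto intro: abs_cont_restrict)
  have "AE t in lebesgue. t \<in> {a..b} \<longrightarrow>
              (D (m - 1) has_real_derivative D m t) (at t within {a..b}) \<and>
              D m t + (\<Sum>k<m. c k t * D k t) + lam * D 0 t = 0"
    using assms unfolding sol_def lebesgue_on_AE_iff by blast
  then have "AE t in lebesgue. t \<in> {a'..b'} \<longrightarrow>
              (D (m - 1) has_real_derivative D m t) (at t within {a'..b'}) \<and>
              D m t + (\<Sum>k<m. c k t * D k t) + lam * D 0 t = 0"
  proof eventually_elim
    case (elim t)
    then show ?case using sub DERIV_subset by blast
  qed
  then show ?thesis unfolding sol_def lebesgue_on_AE_iff using A B by blast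
qed

lemma sol_reflect:
  assumes s: "sol m c a b lam D" and ev: "even m" and m1: "m \<ge> 1"
    and cc: "\<forall>t\<in>{\<sigma> - b..\<sigma> - a}. t \<noteq> xm \<longrightarrow> (\<forall>k<m. c' k t = (-1)^k * c k (\<sigma> - t))"
  shows "sol m c' (\<sigma> - b) (\<sigma> - a) lam (\<lambda>k t. (-1)^k * D k (\<sigma> - t))"
proof -
  have A: "\<forall>k. Suc k < m \<longrightarrow> (\<forall>t\<in>{\<sigma> - b..\<sigma> - a}. ((\<lambda>x. (-1)^k * D k (\<sigma> - x)) has_real_derivative (-1)^(Suc k) * D (Suc k) (\<sigma> - t)) (at t within {\<sigma> - b..\<sigma> - a}))"
  proof (intro allI impI ballI)
    fix k t assume k: "Suc k < m" and t: "t \<in> {\<sigma> - b..\<sigma> - a}"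
    then have "\<sigma> - t \<in> {a..b}" by auto
    then have "(D k has_real_derivative D (Suc k) (\<sigma> - t)) (at (\<sigma> - t) within {a..b})"
      using s k unfolding sol_def by blast
    from DERIV_cmult[OF deriv_reflect[OF this], of "(-1)^k"]
    show "((\<lambda>x. (-1)^k * D k (\<sigma> - x)) has_real_derivative (-1)^(Suc k) * D (Suc k) (\<sigma> - t)) (at t within {\<sigma> - b..\<sigma> - a})"
      by simp
  qed
  have pm: "(-1::real)^(m - 1) = -1" using ev m1
    by (metis One_nat_def add_diff_cancel_left' even_Suc le_add_diff_inverse neg_one_odd_power odd_one plus_1_eq_Suc)
  have pm2: "(-1::real)^m = 1" using ev by simp
  have B: "abs_cont_on (\<sigma> - b) (\<sigma> - a) (\<lambda>t. (-1)^(m - 1) * D (m - 1) (\<sigma> - t))"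
    unfolding pm using s unfolding sol_def by (auto intro!: abs_cont_neg abs_cont_reflect)
  have h0: "AE t in lebesgue. t \<in> {a..b} \<longrightarrow>
              (D (m - 1) has_real_derivative D m t) (at t within {a..b}) \<and>
              D m t + (\<Sum>k<m. c k t * D k t) + lam * D 0 t = 0"
    using s unfolding sol_def lebesgue_on_AE_iff by blast
  note h1 = AE_lebesgue_reflect[OF h0, of \<sigma>]
  note h2 = AE_lebesgue_neq[of xm]
  have "AE t in lebesgue. t \<in> {\<sigma> - b..\<sigma> - a} \<longrightarrow>
      ((\<lambda>x. (-1)^(m - 1) * D (m - 1) (\<sigma> - x)) has_real_derivative (-1)^m * D m (\<sigma> - t)) (at t within {\<sigma> - b..\<sigma> - a}) \<and>
      (-1)^m * D m (\<sigma> - t) + (\<Sum>k<m. c' k t * ((-1)^k * D k (\<sigma> - t))) + lam * ((-1)^0 * D 0 (\<sigma> - t)) = 0"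
    using h1 h2
  proof eventually_elim
    case (elim t)
    show ?case
    proof
      assume t: "t \<in> {\<sigma> - b..\<sigma> - a}"
      then have st: "\<sigma> - t \<in> {a..b}" by auto
      with elim have d: "(D (m - 1) has_real_derivative D m (\<sigma> - t)) (at (\<sigma> - t) within {a..b})"
        and e: "D m (\<sigma> - t) + (\<Sum>k<m. c k (\<sigma> - t) * D k (\<sigma> - t)) + lam * D 0 (\<sigma> - t) = 0" by auto
      have "((\<lambda>x. (-1)^(m - 1) * D (m - 1) (\<sigma> - x)) has_real_derivative (-1)^(m - 1) * (- D m (\<sigma> - t))) (at t within {\<sigma> - b..\<sigma> - a})"
        by (rule DERIV_cmult[OF deriv_reflect[OF d]])
      then have D1: "((\<lambda>x. (-1)^(m - 1) * D (m - 1) (\<sigma> - x)) has_real_derivative (-1)^m * D m (\<sigma> - t)) (at t within {\<sigma> - b..\<sigma> - a})"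
        using pm pm2 by simp
      have "(\<Sum>k<m. c' k t * ((-1)^k * D k (\<sigma> - t))) = (\<Sum>k<m. c k (\<sigma> - t) * D k (\<sigma> - t))"
      proof (rule sum.cong[OF refl])
        fix k assume "k \<in> {..<m}"
        then have "c' k t = (-1)^k * c k (\<sigma> - t)" using cc t elim by auto
        then show "c' k t * ((-1)^k * D k (\<sigma> - t)) = c k (\<sigma> - t) * D k (\<sigma> - t)"
          by (simp flip: power_add mult_2 add: power_mult)
      qed
      then show "((\<lambda>x. (-1)^(m - 1) * D (m - 1) (\<sigma> - x)) has_real_derivative (-1)^m * D m (\<sigma> - t)) (at t within {\<sigma> - b..\<sigma> - a}) \<and>
      (-1)^m * D m (\<sigma> - t) + (\<Sum>k<m. c' k t * ((-1)^k * D k (\<sigma> - t))) + lam * ((-1)^0 * D 0 (\<sigma> - t)) = 0"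
        using D1 e pm2 by simp
    qed
  qed
  then show ?thesis unfolding sol_def lebesgue_on_AE_iff using A B by simp
qed



lemma sol_glue:
  assumes s1: "sol m c1 a q lam D1" and s2: "sol m c2 q b lam D2"
    and aq: "a \<le> q" and qb: "q \<le> b" and m1: "m \<ge> 1"
    and match: "\<forall>k<m. D1 k q = D2 k q"
    and cc1: "\<forall>t. a \<le> t \<and> t < q \<longrightarrow> (\<forall>k<m. c k t = c1 k t)"
    and cc2: "\<forall>t. q < t \<and> t \<le> b \<longrightarrow> (\<forall>k<m. c k t = c2 k t)"
  shows "sol m c a b lam (\<lambda>k t. if t \<le> q then D1 k t else D2 k t)"
proof -
  have A: "\<forall>k. Suc k < m \<longrightarrow> (\<forall>t\<in>{a..b}. ((\<lambda>x. if x \<le> q then D1 k x else D2 k x) has_real_derivative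
            (if t \<le> q then D1 (Suc k) t else D2 (Suc k) t)) (at t within {a..b}))"
  proof (intro allI impI ballI)
    fix k t assume k: "Suc k < m" and t: "t \<in> {a..b}"
    show "((\<lambda>x. if x \<le> q then D1 k x else D2 k x) has_real_derivative
            (if t \<le> q then D1 (Suc k) t else D2 (Suc k) t)) (at t within {a..b})"
    proof (rule deriv_glue[OF aq qb t])
      assume "t \<le> q"
      then show "(D1 k has_real_derivative D1 (Suc k) t) (at t within {a..q})"
        using s1 k t unfolding sol_def by auto
    next
      assume "q \<le> t"
      then show "(D2 k has_real_derivative D2 (Suc k) t) (at t within {q..b})"
        using s2 k t unfolding sol_def by auto
    next
      show "D1 k q = D2 k q" using match k by auto
    next
      assume "t = q" then show "D1 (Suc k) t = D2 (Suc k) t" using match k by auto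
    qed
  qed
  have B: "abs_cont_on a b (\<lambda>x. if x \<le> q then D1 (m - 1) x else D2 (m - 1) x)"
    using s1 s2 match m1 aq qb unfolding sol_def by (intro abs_cont_glue) auto
  have h1: "AE t in lebesgue. t \<in> {a..q} \<longrightarrow>
              (D1 (m - 1) has_real_derivative D1 m t) (at t within {a..q}) \<and>
              D1 m t + (\<Sum>k<m. c1 k t * D1 k t) + lam * D1 0 t = 0"
    using s1 unfolding sol_def lebesgue_on_AE_iff by blast
  have h2: "AE t in lebesgue. t \<in> {q..b} \<longrightarrow>
              (D2 (m - 1) has_real_derivative D2 m t) (at t within {q..b}) \<and>
              D2 m t + (\<Sum>k<m. c2 k t * D2 k t) + lam * D2 0 t = 0"
    using s2 unfolding sol_def lebesgue_on_AE_iff by blast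
  note h3 = AE_lebesgue_neq[of q]
  have "AE t in lebesgue. t \<in> {a..b} \<longrightarrow>
     ((\<lambda>x. if x \<le> q then D1 (m - 1) x else D2 (m - 1) x) has_real_derivative (if t \<le> q then D1 m t else D2 m t)) (at t within {a..b}) \<and>
     (if t \<le> q then D1 m t else D2 m t) + (\<Sum>k<m. c k t * (if t \<le> q then D1 k t else D2 k t)) + lam * (if t \<le> q then D1 0 t else D2 0 t) = 0"
    using h1 h2 h3
  proof eventually_elim
    case (elim t)
    show ?case
    proof
      assume t: "t \<in> {a..b}"
      show "((\<lambda>x. if x \<le> q then D1 (m - 1) x else D2 (m - 1) x) has_real_derivative (if t \<le> q then D1 m t else D2 m t)) (at t within {a..b}) \<and>
     (if t \<le> q then D1 m t else D2 m t) + (\<Sum>k<m. c k t * (if t \<le> q then D1 k t else D2 k t)) + lam * (if t \<le> q then D1 0 t else D2 0 t) = 0"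
      proof (cases "t < q")
        case True
        then have tt: "t \<in> {a..q}" "t \<le> q" "\<not> q \<le> t" using t by auto
        have d: "((\<lambda>x. if x \<le> q then D1 (m - 1) x else D2 (m - 1) x) has_real_derivative (if t \<le> q then D1 m t else D2 m t)) (at t within {a..b})"
          by (rule deriv_glue[OF aq qb t]) (use elim tt match m1 in auto)
        have "(\<Sum>k<m. c k t * (if t \<le> q then D1 k t else D2 k t)) = (\<Sum>k<m. c1 k t * D1 k t)"
          using cc1 True t tt(2) by (intro sum.cong) auto
        then show ?thesis using d elim tt by simp
      next
        case False
        then have tt: "t \<in> {q..b}" "\<not> t \<le> q" "q < t" using t elim by auto
        have d: "((\<lambda>x. if x \<le> q then D1 (m - 1) x else D2 (m - 1) x) has_real_derivative (if t \<le> q then D1 m t else D2 m t)) (at t within {a..b})"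
          by (rule deriv_glue[OF aq qb t]) (use elim tt match m1 in auto)
        have "(\<Sum>k<m. c k t * (if t \<le> q then D1 k t else D2 k t)) = (\<Sum>k<m. c2 k t * D2 k t)"
          using cc2 tt t by (intro sum.cong) auto
        then show ?thesis using d elim tt by simp
      qed
    qed
  qed
  then show ?thesis unfolding sol_def lebesgue_on_AE_iff using A B by simp
qed

lemma sol_unique:
  assumes s: "sol m c a b lam D" and s': "sol m c' a b lam' D'" and ab: "a < b"
    and eq: "\<forall>t\<in>{a..b}. D' 0 t = z * D 0 t"
  shows "k < m \<Longrightarrow> \<forall>t\<in>{a..b}. D' k t = z * D k t"
proof (induction k)
  case 0 then show ?case using eq by simp
next
  case (Suc k)
  then have IH: "\<forall>t\<in>{a..b}. D' k t = z * D k t" by simp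
  show ?case
  proof
    fix t assume t: "t \<in> {a..b}"
    have d1: "(D' k has_real_derivative D' (Suc k) t) (at t within {a..b})"
      using s' Suc.prems t unfolding sol_def by blast
    have "(D k has_real_derivative D (Suc k) t) (at t within {a..b})"
      using s Suc.prems t unfolding sol_def by blast
    then have "((\<lambda>x. z * D k x) has_real_derivative z * D (Suc k) t) (at t within {a..b})"
      by (rule DERIV_cmult)
    then have d2: "(D' k has_real_derivative z * D (Suc k) t) (at t within {a..b})"
      by (rule has_field_derivative_transform_within[OF _ zero_less_one t]) (use IH in auto)
    show "D' (Suc k) t = z * D (Suc k) t"
      using vector_derivative_unique_within_closed_interval[of a b t "D' k"] d1 d2 ab t
      by (simp add: has_real_derivative_iff_has_vector_derivative cbox_interval)
  qed
qed



lemma sol_coeff: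
  assumes s: "sol m c a b lam D" and cc: "\<forall>t\<in>{a..b}. \<forall>k<m. c k t = c' k t"
  shows "sol m c' a b lam D"
proof -
  have h: "AE t in lebesgue. t \<in> {a..b} \<longrightarrow>
              (D (m - 1) has_real_derivative D m t) (at t within {a..b}) \<and>
              D m t + (\<Sum>k<m. c k t * D k t) + lam * D 0 t = 0"
    using s unfolding sol_def lebesgue_on_AE_iff by blast
  have "AE t in lebesgue. t \<in> {a..b} \<longrightarrow>
              (D (m - 1) has_real_derivative D m t) (at t within {a..b}) \<and>
              D m t + (\<Sum>k<m. c' k t * D k t) + lam * D 0 t = 0"
    using h
  proof eventually_elim
    case (elim t)
    show ?case
    proof
      assume t: "t \<in> {a..b}"
      have "(\<Sum>k<m. c' k t * D k t) = (\<Sum>k<m. c k t * D k t)"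
        using cc t by (intro sum.cong) auto
      then show "(D (m - 1) has_real_derivative D m t) (at t within {a..b}) \<and>
              D m t + (\<Sum>k<m. c' k t * D k t) + lam * D 0 t = 0" using elim t by simp
    qed
  qed
  then show ?thesis using s unfolding sol_def lebesgue_on_AE_iff by blast
qed

lemma ext_even:
  assumes s: "sol m c 0 q lam D" and ev: "even m" and m1: "m \<ge> 1" and q: "q \<ge> 0" and L: "L = 2 * q"
    and match: "\<forall>k<m. D k q = (-1)^k * D k q"
    and c1: "\<forall>t. 0 \<le> t \<and> t < q \<longrightarrow> (\<forall>k<m. c' k t = c k t)"
    and c2: "\<forall>t. q < t \<and> t \<le> L \<longrightarrow> (\<forall>k<m. c' k t = (-1)^k * c k (L - t))"
  shows "sol m c' 0 L lam (\<lambda>k t. if t \<le> q then D k t else (-1)^k * D k (L - t))"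
proof -
  have r: "sol m c' (L - q) (L - 0) lam (\<lambda>k t. (-1)^k * D k (L - t))"
    by (rule sol_reflect[OF s ev m1, where xm = q]) (use c2 L in auto)
  have r': "sol m c' q L lam (\<lambda>k t. (-1)^k * D k (L - t))" using r L by simp
  show ?thesis
    by (rule sol_glue[OF s r' q _ m1, where c=c']) (use L q match c1 in auto)
qed

lemma ext_odd:
  assumes s: "sol m c 0 q lam D" and ev: "even m" and m1: "m \<ge> 1" and q: "q \<ge> 0" and L: "L = 2 * q"
    and match: "\<forall>k<m. D k q = - ((-1)^k * D k q)"
    and c1: "\<forall>t. 0 \<le> t \<and> t < q \<longrightarrow> (\<forall>k<m. c' k t = c k t)"
    and c2: "\<forall>t. q < t \<and> t \<le> L \<longrightarrow> (\<forall>k<m. c' k t = (-1)^k * c k (L - t))"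
  shows "sol m c' 0 L lam (\<lambda>k t. if t \<le> q then D k t else - ((-1)^k * D k (L - t)))"
proof -
  have r: "sol m c' (L - q) (L - 0) lam (\<lambda>k t. (-1)^k * D k (L - t))"
    by (rule sol_reflect[OF s ev m1, where xm = q]) (use c2 L in auto)
  have r': "sol m c' q L lam (\<lambda>k t. - ((-1)^k * D k (L - t)))" using sol_neg[OF r] L by simp
  show ?thesis
    by (rule sol_glue[OF s r' q _ m1, where c=c']) (use L q match c1 in auto)
qed

lemma reflect_c1: "\<forall>t. 0 \<le> t \<and> t < q \<longrightarrow> (\<forall>k<m. reflect q c k t = c k t)"
  by (simp add: reflect_def)

lemma reflect_c2: "L = 2 * q \<Longrightarrow> \<forall>t. q < t \<and> t \<le> L \<longrightarrow> (\<forall>k<m. reflect q c k t = (-1)^k * c k (L - t))"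
  by (simp add: reflect_def)

lemma reflect_sym: "L = 2 * q \<Longrightarrow> \<forall>t\<in>{0..L}. t \<noteq> q \<longrightarrow> (\<forall>k<m. reflect q c k t = (-1)^k * reflect q c k (L - t))"
  by (auto simp: reflect_def simp flip: power_add mult_2 simp add: power_mult)

lemma first_le:
  assumes "first_eig m c a b BC l" "sol m c a b lam D" "BC D" "t \<in> {a..b}" "D 0 t \<noteq> 0"
  shows "l \<le> lam"
proof -
  have "eigfun m c a b BC lam (D 0)" unfolding eigfun_sol using assms by blast
  then have "lam \<in> spec m c a b BC" unfolding spec_def by blast
  then show ?thesis using assms(1) unfolding first_eig_def by blast
qed

lemma first_lt:
  assumes f: "first_eig m c a b BC l" and s: "sol m c a b lam D" and bc: "BC D"
    and t1: "t1 \<in> {a..b}" and t2: "t2 \<in> {a..b}" and neg: "D 0 t1 * D 0 t2 < 0"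
  shows "l < lam"
proof -
  have nz: "D 0 t1 \<noteq> 0" using neg by auto
  have le: "l \<le> lam" by (rule first_le[OF f s bc t1 nz])
  have "l \<noteq> lam"
  proof
    assume "l = lam"
    then have "eigfun m c a b BC l (D 0)" unfolding eigfun_sol using s bc t1 nz by blast
    then have "(\<forall>t\<in>{a..b}. 0 \<le> D 0 t) \<or> (\<forall>t\<in>{a..b}. D 0 t \<le> 0)"
      using f unfolding first_eig_def by blast
    then show False using neg t1 t2
      by (metis mult_nonneg_nonneg mult_nonpos_nonpos not_less)
  qed
  then show ?thesis using le by simp
qed

lemma first_obtain:
  assumes f: "first_eig m c a b BC l"
  obtains D t0 where "sol m c a b l D" "BC D" "t0 \<in> {a..b}" "D 0 t0 \<noteq> 0"
    "(\<forall>t\<in>{a..b}. 0 \<le> D 0 t) \<or> (\<forall>t\<in>{a..b}. D 0 t \<le> 0)"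
proof -
  have "l \<in> spec m c a b BC" using f unfolding first_eig_def by blast
  then obtain u where u: "eigfun m c a b BC l u" unfolding spec_def by blast
  then obtain D t0 where D: "sol m c a b l D" "\<forall>t\<in>{a..b}. D 0 t = u t" "BC D" "t0 \<in> {a..b}" "u t0 \<noteq> 0"
    unfolding eigfun_sol by blast
  have "(\<forall>t\<in>{a..b}. 0 \<le> u t) \<or> (\<forall>t\<in>{a..b}. u t \<le> 0)" using f u unfolding first_eig_def by blast
  then show ?thesis using D by (intro that[of D t0]) auto
qed

lemma first_sym:
  assumes f: "first_eig m c 0 L BC l" and L: "L > 0" and ev: "even m" and m1: "m \<ge> 1"
    and sym: "\<forall>t\<in>{0..L}. t \<noteq> xm \<longrightarrow> (\<forall>k<m. c k t = (-1)^k * c k (L - t))"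
    and bcs: "\<And>D. BC D \<Longrightarrow> BC (\<lambda>k t. (-1)^k * D k (L - t))"
    and s: "sol m c 0 L l D" and bc: "BC D" and t0: "t0 \<in> {0..L}" and nz: "D 0 t0 \<noteq> 0"
  shows "\<exists>z. (z = 1 \<or> z = -1) \<and> (\<forall>k<m. \<forall>t\<in>{0..L}. (-1)^k * D k (L - t) = z * D k t)"
proof -
  let ?R = "\<lambda>k t. (-1)^k * D k (L - t)"
  have r0: "sol m c (L - L) (L - 0) l ?R"
    by (rule sol_reflect[OF s ev m1, where xm = xm]) (use sym in auto)
  have r: "sol m c 0 L l ?R" using r0 by simp
  have e1: "eigfun m c 0 L BC l (D 0)" unfolding eigfun_sol using s bc t0 nz by blast
  have t0': "L - t0 \<in> {0..L}" using t0 by auto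
  have e2: "eigfun m c 0 L BC l (?R 0)" unfolding eigfun_sol
    using r bcs[OF bc] t0' nz by (intro conjI exI[of _ ?R] bexI[of _ "L - t0"]) auto
  obtain u where u: "\<forall>v. eigfun m c 0 L BC l v \<longrightarrow> (\<exists>s::real. \<forall>t\<in>{0..L}. v t = s * u t)"
    using f unfolding first_eig_def by blast
  obtain s1 where s1: "\<forall>t\<in>{0..L}. D 0 t = s1 * u t" using u e1 by blast
  obtain s2 where s2: "\<forall>t\<in>{0..L}. ?R 0 t = s2 * u t" using u e2 by blast
  have "s1 \<noteq> 0" using s1 t0 nz by auto
  define z where "z = s2 / s1"
  have zr: "\<forall>t\<in>{0..L}. ?R 0 t = z * D 0 t"
    using s1 s2 \<open>s1 \<noteq> 0\<close> unfolding z_def by auto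
  have all: "\<forall>k<m. \<forall>t\<in>{0..L}. ?R k t = z * D k t"
    using sol_unique[OF s r _ zr] L by blast
  have "D 0 t0 = z * (z * D 0 t0)"
  proof -
    have "?R 0 (L - t0) = z * D 0 (L - t0)" using zr t0' by blast
    moreover have "?R 0 t0 = z * D 0 t0" using zr t0 by blast
    ultimately show ?thesis by simp
  qed
  then have "z * z = 1" using nz
    by (metis mult.assoc mult_cancel_right1)
  then have "z = 1 \<or> z = -1"
    by (metis mult_cancel_left mult_cancel_right1 mult_minus_left square_eq_iff)
  then show ?thesis using all by blast
qed

lemma first_sym_pos:
  assumes f: "first_eig m c 0 L BC l" and L: "L > 0" and ev: "even m" and m1: "m \<ge> 1"
    and sym: "\<forall>t\<in>{0..L}. t \<noteq> xm \<longrightarrow> (\<forall>k<m. c k t = (-1)^k * c k (L - t))"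
    and bcs: "\<And>D. BC D \<Longrightarrow> BC (\<lambda>k t. (-1)^k * D k (L - t))"
    and s: "sol m c 0 L l D" and bc: "BC D" and t0: "t0 \<in> {0..L}" and nz: "D 0 t0 \<noteq> 0"
    and sg: "(\<forall>t\<in>{0..L}. 0 \<le> D 0 t) \<or> (\<forall>t\<in>{0..L}. D 0 t \<le> 0)"
  shows "\<forall>k<m. \<forall>t\<in>{0..L}. (-1)^k * D k (L - t) = D k t"
proof -
  obtain z where z: "z = 1 \<or> z = -1" "\<forall>k<m. \<forall>t\<in>{0..L}. (-1)^k * D k (L - t) = z * D k t"
    using first_sym[OF f L ev m1 sym bcs s bc t0 nz] by blast
  have "z = 1"
  proof (rule ccontr)
    assume "z \<noteq> 1"
    then have zm: "z = -1" using z by simp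
    have "0 < m" using m1 by simp
    then have "D 0 (L - t0) = - D 0 t0" using z(2) zm t0 by auto
    moreover have "L - t0 \<in> {0..L}" using t0 by auto
    moreover have a1: "0 \<le> D 0 t0 \<and> 0 \<le> D 0 (L - t0) \<or> D 0 t0 \<le> 0 \<and> D 0 (L - t0) \<le> 0"
      using sg t0 \<open>L - t0 \<in> {0..L}\<close> by blast
    ultimately show False using nz by (elim disjE conjE) linarith+
  qed
  then show ?thesis using z by simp
qed

lemma nz_half:
  assumes "(t0::real) \<in> {0..L}" "D 0 t0 \<noteq> 0" "L = 2 * q"
    and "\<forall>t\<in>{0..L}. D 0 (L - t) = D 0 t \<or> D 0 (L - t) = - D 0 t"
  shows "\<exists>t\<in>{0..q}. D 0 t \<noteq> (0::real)"
proof (cases "t0 \<le> q")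
  case True then show ?thesis using assms by auto
next
  case False
  then have "L - t0 \<in> {0..q}" using assms by auto
  moreover have "D 0 (L - t0) \<noteq> 0" using assms by force
  ultimately show ?thesis by blast
qed

lemma par_odd:
  assumes "\<forall>j<n. D (2*j+1) x = (0::real)" "k < 2*n"
  shows "(-1)^k * D k x = D k x"
proof (cases "even k")
  case True then show ?thesis by simp
next
  case False
  then obtain j where "k = 2*j+1" by (metis oddE)
  with assms show ?thesis by simp
qed

lemma par_even:
  assumes "\<forall>j<n. D (2*j) x = (0::real)" "k < 2*n"
  shows "(-1)^k * D k x = - D k x"
proof (cases "even k")
  case True
  then obtain j where "k = 2*j" by (metis evenE)
  with assms show ?thesis by simp
next
  case False then show ?thesis by simp
qed

lemma par_odd_conv:
  assumes "\<forall>k<2*n. (-1::real)^k * D k x = D k x"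
  shows "\<forall>j<n. D (2*j+1) x = 0"
proof (intro allI impI)
  fix j assume "j < n"
  then have h: "(-1)^(2*j+1) * D (2*j+1) x = D (2*j+1) x" using assms[rule_format, of "2*j+1"] by linarith
  have e: "(-1::real)^(2*j+1) = -1" by (simp add: power_mult)
  show "D (2*j+1) x = 0" using h unfolding e by linarith
qed

lemma par_even_conv:
  assumes "\<forall>k<2*n. (-1::real)^k * D k x = - D k x"
  shows "\<forall>j<n. D (2*j) x = 0"
proof (intro allI impI)
  fix j assume "j < n"
  then have h: "(-1)^(2*j) * D (2*j) x = - D (2*j) x" using assms[rule_format, of "2*j"] by linarith
  have e: "(-1::real)^(2*j) = 1" by (simp add: power_mult)
  show "D (2*j) x = 0" using h unfolding e by linarith
qed



lemma sqpos: "x \<noteq> 0 \<Longrightarrow> 0 < x * (x::real)"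
  using linorder_neq_iff[of x 0] by (auto simp: zero_less_mult_iff)

theorem theorem4p2:
  fixes n :: nat and T :: real and a :: "nat \<Rightarrow> real \<Rightarrow> real"
    and lN lD lM1 lM2 lP2 lA2 lN2 lD2 lP4 :: real
  assumes n: "n \<ge> 1" and T: "T > 0"
    and a_int: "\<forall>k<2*n. a k absolutely_integrable_on {0..T}"
    and hN: "first_eig (2*n) a 0 T (bcN n 0 T) lN"
    and hD: "first_eig (2*n) a 0 T (bcD n 0 T) lD"
    and hM1: "first_eig (2*n) a 0 T (bcM1 n 0 T) lM1"
    and hM2: "first_eig (2*n) a 0 T (bcM2 n 0 T) lM2"
    and hP2: "first_eig (2*n) (reflect T a) 0 (2*T) (bcP n 0 (2*T)) lP2"
    and hA2: "first_eig (2*n) (reflect T a) 0 (2*T) (bcA n 0 (2*T)) lA2"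
    and hN2: "first_eig (2*n) (reflect T a) 0 (2*T) (bcN n 0 (2*T)) lN2"
    and hD2: "first_eig (2*n) (reflect T a) 0 (2*T) (bcD n 0 (2*T)) lD2"
    and hP4: "first_eig (2*n) (reflect (2*T) (reflect T a)) 0 (4*T) (bcP n 0 (4*T)) lP4"
  shows "(lN = lP2 \<and> lP2 < lD) \<and>
         (lN = lN2 \<and> lN2 < lM1) \<and>
         lN = lP4 \<and>
         (lM2 = lD2 \<and> lD2 < lD) \<and>
         lN < lM2 \<and>
         lA2 = min lM1 lM2"
proof -
  have ev: "even (2*n)" by simp
  have m1: "2*n \<ge> 1" using n by simp
  have n0: "0 < n" using n by simp
  have T0: "T \<ge> 0" using T by simp
  have T2: "2*T > 0" using T by simp
  have T4: "4*T > 0" using T by simp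
  note c1 = reflect_c1 and c2 = reflect_c2[OF refl]
  have c2F: "\<forall>t. 2*T < t \<and> t \<le> 4*T \<longrightarrow> (\<forall>k<2*n. reflect (2*T) (reflect T a) k t = (-1)^k * reflect T a k (4*T - t))"
    by (rule reflect_c2) simp
  have symT: "\<forall>t\<in>{0..2*T}. t \<noteq> T \<longrightarrow> (\<forall>k<2*n. reflect T a k t = (-1)^k * reflect T a k (2*T - t))"
    by (rule reflect_sym) simp
  have symF: "\<forall>t\<in>{0..4*T}. t \<noteq> 2*T \<longrightarrow> (\<forall>k<2*n. reflect (2*T) (reflect T a) k t = (-1)^k * reflect (2*T) (reflect T a) k (4*T - t))"
    by (rule reflect_sym) simp
  have resT: "\<forall>t\<in>{0..T}. \<forall>k<2*n. reflect T a k t = a k t" by (simp add: reflect_def)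
  have resF: "\<forall>t\<in>{0..2*T}. \<forall>k<2*n. reflect (2*T) (reflect T a) k t = reflect T a k t" by (simp add: reflect_def)

  obtain DN tN where DN: "sol (2*n) a 0 T lN DN" "bcN n 0 T DN" "tN \<in> {0..T}" "DN 0 tN \<noteq> 0"
    using first_obtain[OF hN] by metis
  obtain DD tD where DD: "sol (2*n) a 0 T lD DD" "bcD n 0 T DD" "tD \<in> {0..T}" "DD 0 tD \<noteq> 0"
    using first_obtain[OF hD] by metis
  obtain DM1 tM1 where DM1: "sol (2*n) a 0 T lM1 DM1" "bcM1 n 0 T DM1" "tM1 \<in> {0..T}" "DM1 0 tM1 \<noteq> 0"
    using first_obtain[OF hM1] by metis
  obtain DM2 tM2 where DM2: "sol (2*n) a 0 T lM2 DM2" "bcM2 n 0 T DM2" "tM2 \<in> {0..T}" "DM2 0 tM2 \<noteq> 0"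
    using first_obtain[OF hM2] by metis

  have N0: "\<forall>j<n. DN (2*j+1) 0 = 0" and NT: "\<forall>j<n. DN (2*j+1) T = 0" using DN(2) unfolding bcN_def by auto
  have D0: "\<forall>j<n. DD (2*j) 0 = 0" and DT: "\<forall>j<n. DD (2*j) T = 0" using DD(2) unfolding bcD_def by auto
  have M10: "\<forall>j<n. DM1 (2*j+1) 0 = 0" and M1T: "\<forall>j<n. DM1 (2*j) T = 0" using DM1(2) unfolding bcM1_def by auto
  have M20: "\<forall>j<n. DM2 (2*j) 0 = 0" and M2T: "\<forall>j<n. DM2 (2*j+1) T = 0" using DM2(2) unfolding bcM2_def by auto

  have EN: "sol (2*n) (reflect T a) 0 (2*T) lN (\<lambda>k t. if t \<le> T then DN k t else (-1)^k * DN k (2*T - t))"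
    by (rule ext_even[OF DN(1) ev m1 T0 refl _ c1 c2]) (use par_odd[where n=n and D=DN and x=T, OF NT] in auto)
  have OD: "sol (2*n) (reflect T a) 0 (2*T) lD (\<lambda>k t. if t \<le> T then DD k t else - ((-1)^k * DD k (2*T - t)))"
    by (rule ext_odd[OF DD(1) ev m1 T0 refl _ c1 c2]) (use par_even[where n=n and D=DD and x=T, OF DT] in auto)
  have OM1: "sol (2*n) (reflect T a) 0 (2*T) lM1 (\<lambda>k t. if t \<le> T then DM1 k t else - ((-1)^k * DM1 k (2*T - t)))"
    by (rule ext_odd[OF DM1(1) ev m1 T0 refl _ c1 c2]) (use par_even[where n=n and D=DM1 and x=T, OF M1T] in auto)
  have EM2: "sol (2*n) (reflect T a) 0 (2*T) lM2 (\<lambda>k t. if t \<le> T then DM2 k t else (-1)^k * DM2 k (2*T - t))"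
    by (rule ext_even[OF DM2(1) ev m1 T0 refl _ c1 c2]) (use par_odd[where n=n and D=DM2 and x=T, OF M2T] in auto)

  have DD0T: "DD 0 T = 0" using DT n0 by auto
  have tDlt: "tD < T" using DD(3,4) DD0T by (cases "tD = T") auto
  have DM10T: "DM1 0 T = 0" using M1T n0 by auto
  have tM1lt: "tM1 < T" using DM1(3,4) DM10T by (cases "tM1 = T") auto

  have P1a: "lP2 \<le> lN"
  proof (rule first_le[OF hP2 EN])
    show "bcP n 0 (2*T) (\<lambda>k t. if t \<le> T then DN k t else (-1)^k * DN k (2*T - t))"
      unfolding bcP_def using T par_odd[where n=n and D=DN and x=0, OF N0] by auto
    show "tN \<in> {0..2*T}" using DN(3) T by auto
    show "(if tN \<le> T then DN 0 tN else (-1)^0 * DN 0 (2*T - tN)) \<noteq> 0" using DN(3,4) by auto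
  qed
  have P1c: "lP2 < lD"
  proof (rule first_lt[OF hP2 OD])
    show "bcP n 0 (2*T) (\<lambda>k t. if t \<le> T then DD k t else - ((-1)^k * DD k (2*T - t)))"
      unfolding bcP_def using T par_even[where n=n and D=DD and x=0, OF D0] by auto
    show "tD \<in> {0..2*T}" "2*T - tD \<in> {0..2*T}" using DD(3) T by auto
    show "(if tD \<le> T then DD 0 tD else - ((-1)^0 * DD 0 (2*T - tD))) *
          (if 2*T - tD \<le> T then DD 0 (2*T - tD) else - ((-1)^0 * DD 0 (2*T - (2*T - tD)))) < 0"
      using DD(3,4) tDlt sqpos[of "DD 0 tD"] by (simp add: mult_less_0_iff)
  qed
  have P1b: "lN \<le> lP2"
  proof -
    obtain DP tP where DP: "sol (2*n) (reflect T a) 0 (2*T) lP2 DP" "bcP n 0 (2*T) DP" "tP \<in> {0..2*T}" "DP 0 tP \<noteq> 0"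
      "(\<forall>t\<in>{0..2*T}. 0 \<le> DP 0 t) \<or> (\<forall>t\<in>{0..2*T}. DP 0 t \<le> 0)"
      using first_obtain[OF hP2] by metis
    have bcs: "bcP n 0 (2*T) (\<lambda>k t. (-1)^k * D k (2*T - t))" if "bcP n 0 (2*T) D" for D
      using that unfolding bcP_def by auto
    have sy: "\<forall>k<2*n. \<forall>t\<in>{0..2*T}. (-1)^k * DP k (2*T - t) = DP k t"
      by (rule first_sym_pos[OF hP2 T2 ev m1 symT bcs DP])
    have "\<forall>j<n. DP (2*j+1) T = 0"
    proof (rule par_odd_conv, intro allI impI)
      fix k assume k: "k < 2*n"
      have "(-1)^k * DP k (2*T - T) = DP k T" using sy[rule_format, of k T] k T by simp
      then show "(-1::real)^k * DP k T = DP k T" by simp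
    qed
    moreover have "\<forall>j<n. DP (2*j+1) 0 = 0"
    proof (rule par_odd_conv, intro allI impI)
      fix k assume k: "k < 2*n"
      have "(-1)^k * DP k (2*T - 0) = DP k 0" using sy[rule_format, of k 0] k T by simp
      moreover have "DP k 0 = DP k (2*T)" using DP(2) k unfolding bcP_def by auto
      ultimately show "(-1::real)^k * DP k 0 = DP k 0" by simp
    qed
    ultimately have bc: "bcN n 0 T DP" unfolding bcN_def by auto
    have s: "sol (2*n) a 0 T lP2 DP"
      by (rule sol_coeff[OF sol_restrict[OF DP(1)]]) (use resT T in auto)
    have "\<exists>t\<in>{0..T}. DP 0 t \<noteq> 0"
      by (rule nz_half[where q=T and D=DP and L="2*T", OF DP(3,4)]) (use sy[rule_format, of 0] n0 in auto)
    then obtain t where tt: "t \<in> {0..T}" "DP 0 t \<noteq> 0" by blast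
    show ?thesis using first_le[OF hN s bc tt(1) tt(2)] .
  qed

  have P2a: "lN2 \<le> lN"
  proof (rule first_le[OF hN2 EN])
    show "bcN n 0 (2*T) (\<lambda>k t. if t \<le> T then DN k t else (-1)^k * DN k (2*T - t))"
      unfolding bcN_def using T N0 by auto
    show "tN \<in> {0..2*T}" using DN(3) T by auto
    show "(if tN \<le> T then DN 0 tN else (-1)^0 * DN 0 (2*T - tN)) \<noteq> 0" using DN(3,4) by auto
  qed
  have P2c: "lN2 < lM1"
  proof (rule first_lt[OF hN2 OM1])
    show "bcN n 0 (2*T) (\<lambda>k t. if t \<le> T then DM1 k t else - ((-1)^k * DM1 k (2*T - t)))"
      unfolding bcN_def using T M10 by auto
    show "tM1 \<in> {0..2*T}" "2*T - tM1 \<in> {0..2*T}" using DM1(3) T by auto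
    show "(if tM1 \<le> T then DM1 0 tM1 else - ((-1)^0 * DM1 0 (2*T - tM1))) *
          (if 2*T - tM1 \<le> T then DM1 0 (2*T - tM1) else - ((-1)^0 * DM1 0 (2*T - (2*T - tM1)))) < 0"
      using DM1(3,4) tM1lt sqpos[of "DM1 0 tM1"] by (simp add: mult_less_0_iff)
  qed
  have P2b: "lN \<le> lN2"
  proof -
    obtain DP tP where DP: "sol (2*n) (reflect T a) 0 (2*T) lN2 DP" "bcN n 0 (2*T) DP" "tP \<in> {0..2*T}" "DP 0 tP \<noteq> 0"
      "(\<forall>t\<in>{0..2*T}. 0 \<le> DP 0 t) \<or> (\<forall>t\<in>{0..2*T}. DP 0 t \<le> 0)"
      using first_obtain[OF hN2] by metis
    have bcs: "bcN n 0 (2*T) (\<lambda>k t. (-1)^k * D k (2*T - t))" if "bcN n 0 (2*T) D" for D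
      using that unfolding bcN_def by auto
    have sy: "\<forall>k<2*n. \<forall>t\<in>{0..2*T}. (-1)^k * DP k (2*T - t) = DP k t"
      by (rule first_sym_pos[OF hN2 T2 ev m1 symT bcs DP])
    have "\<forall>j<n. DP (2*j+1) T = 0"
    proof (rule par_odd_conv, intro allI impI)
      fix k assume k: "k < 2*n"
      have "(-1)^k * DP k (2*T - T) = DP k T" using sy[rule_format, of k T] k T by simp
      then show "(-1::real)^k * DP k T = DP k T" by simp
    qed
    moreover have "\<forall>j<n. DP (2*j+1) 0 = 0" using DP(2) unfolding bcN_def by auto
    ultimately have bc: "bcN n 0 T DP" unfolding bcN_def by auto
    have s: "sol (2*n) a 0 T lN2 DP"
      by (rule sol_coeff[OF sol_restrict[OF DP(1)]]) (use resT T in auto)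
    have "\<exists>t\<in>{0..T}. DP 0 t \<noteq> 0"
      by (rule nz_half[where q=T and D=DP and L="2*T", OF DP(3,4)]) (use sy[rule_format, of 0] n0 in auto)
    then obtain t where tt: "t \<in> {0..T}" "DP 0 t \<noteq> 0" by blast
    show ?thesis using first_le[OF hN s bc tt(1) tt(2)] .
  qed

  have FN: "sol (2*n) (reflect (2*T) (reflect T a)) 0 (4*T) lN
     (\<lambda>k t. if t \<le> 2*T then (if t \<le> T then DN k t else (-1)^k * DN k (2*T - t))
            else (-1)^k * (if 4*T - t \<le> T then DN k (4*T - t) else (-1)^k * DN k (2*T - (4*T - t))))"
  proof (rule ext_even[OF EN ev m1 _ _ _ c1 c2F])
    show "0 \<le> 2*T" using T by simp
    show "4*T = 2*(2*T)" by simp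
    show "\<forall>k<2*n. (if 2*T \<le> T then DN k (2*T) else (-1)^k * DN k (2*T - 2*T)) =
        (-1)^k * (if 2*T \<le> T then DN k (2*T) else (-1)^k * DN k (2*T - 2*T))"
      using T par_odd[where n=n and D=DN and x=0, OF N0] by auto
  qed
  have P3a: "lP4 \<le> lN"
  proof (rule first_le[OF hP4 FN])
    show "bcP n 0 (4*T) (\<lambda>k t. if t \<le> 2*T then (if t \<le> T then DN k t else (-1)^k * DN k (2*T - t))
            else (-1)^k * (if 4*T - t \<le> T then DN k (4*T - t) else (-1)^k * DN k (2*T - (4*T - t))))"
      unfolding bcP_def using T par_odd[where n=n and D=DN and x=0, OF N0] by auto
    show "tN \<in> {0..4*T}" using DN(3) T by auto
    show "(if tN \<le> 2*T then (if tN \<le> T then DN 0 tN else (-1)^0 * DN 0 (2*T - tN))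
            else (-1)^0 * (if 4*T - tN \<le> T then DN 0 (4*T - tN) else (-1)^0 * DN 0 (2*T - (4*T - tN))))
          \<noteq> 0" using DN(3,4) T by auto
  qed
  have P3b: "lN2 \<le> lP4"
  proof -
    obtain DP tP where DP: "sol (2*n) (reflect (2*T) (reflect T a)) 0 (4*T) lP4 DP" "bcP n 0 (4*T) DP" "tP \<in> {0..4*T}" "DP 0 tP \<noteq> 0"
      "(\<forall>t\<in>{0..4*T}. 0 \<le> DP 0 t) \<or> (\<forall>t\<in>{0..4*T}. DP 0 t \<le> 0)"
      using first_obtain[OF hP4] by metis
    have bcs: "bcP n 0 (4*T) (\<lambda>k t. (-1)^k * D k (4*T - t))" if "bcP n 0 (4*T) D" for D
      using that unfolding bcP_def by auto
    have sy: "\<forall>k<2*n. \<forall>t\<in>{0..4*T}. (-1)^k * DP k (4*T - t) = DP k t"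
      by (rule first_sym_pos[OF hP4 T4 ev m1 symF bcs DP])
    have "\<forall>j<n. DP (2*j+1) (2*T) = 0"
    proof (rule par_odd_conv, intro allI impI)
      fix k assume k: "k < 2*n"
      have "(-1)^k * DP k (4*T - 2*T) = DP k (2*T)" using sy[rule_format, of k "2*T"] k T by simp
      then show "(-1::real)^k * DP k (2*T) = DP k (2*T)" by simp
    qed
    moreover have "\<forall>j<n. DP (2*j+1) 0 = 0"
    proof (rule par_odd_conv, intro allI impI)
      fix k assume k: "k < 2*n"
      have "(-1)^k * DP k (4*T - 0) = DP k 0" using sy[rule_format, of k 0] k T by simp
      moreover have "DP k 0 = DP k (4*T)" using DP(2) k unfolding bcP_def by auto
      ultimately show "(-1::real)^k * DP k 0 = DP k 0" by simp
    qed
    ultimately have bc: "bcN n 0 (2*T) DP" unfolding bcN_def by auto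
    have s: "sol (2*n) (reflect T a) 0 (2*T) lP4 DP"
      by (rule sol_coeff[OF sol_restrict[OF DP(1)]]) (use resF T in auto)
    have "\<exists>t\<in>{0..2*T}. DP 0 t \<noteq> 0"
      by (rule nz_half[where q="2*T" and D=DP and L="4*T", OF DP(3,4)]) (use sy[rule_format, of 0] n0 in auto)
    then obtain t where tt: "t \<in> {0..2*T}" "DP 0 t \<noteq> 0" by blast
    show ?thesis using first_le[OF hN2 s bc tt(1) tt(2)] .
  qed

  have P4a: "lD2 \<le> lM2"
  proof (rule first_le[OF hD2 EM2])
    show "bcD n 0 (2*T) (\<lambda>k t. if t \<le> T then DM2 k t else (-1)^k * DM2 k (2*T - t))"
      unfolding bcD_def using T M20 by auto
    show "tM2 \<in> {0..2*T}" using DM2(3) T by auto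
    show "(if tM2 \<le> T then DM2 0 tM2 else (-1)^0 * DM2 0 (2*T - tM2)) \<noteq> 0" using DM2(3,4) by auto
  qed
  have P4c: "lD2 < lD"
  proof (rule first_lt[OF hD2 OD])
    show "bcD n 0 (2*T) (\<lambda>k t. if t \<le> T then DD k t else - ((-1)^k * DD k (2*T - t)))"
      unfolding bcD_def using T D0 by auto
    show "tD \<in> {0..2*T}" "2*T - tD \<in> {0..2*T}" using DD(3) T by auto
    show "(if tD \<le> T then DD 0 tD else - ((-1)^0 * DD 0 (2*T - tD))) *
          (if 2*T - tD \<le> T then DD 0 (2*T - tD) else - ((-1)^0 * DD 0 (2*T - (2*T - tD)))) < 0"
      using DD(3,4) tDlt sqpos[of "DD 0 tD"] by (simp add: mult_less_0_iff)
  qed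
  have P4b: "lM2 \<le> lD2"
  proof -
    obtain DP tP where DP: "sol (2*n) (reflect T a) 0 (2*T) lD2 DP" "bcD n 0 (2*T) DP" "tP \<in> {0..2*T}" "DP 0 tP \<noteq> 0"
      "(\<forall>t\<in>{0..2*T}. 0 \<le> DP 0 t) \<or> (\<forall>t\<in>{0..2*T}. DP 0 t \<le> 0)"
      using first_obtain[OF hD2] by metis
    have bcs: "bcD n 0 (2*T) (\<lambda>k t. (-1)^k * D k (2*T - t))" if "bcD n 0 (2*T) D" for D
      using that unfolding bcD_def by auto
    have sy: "\<forall>k<2*n. \<forall>t\<in>{0..2*T}. (-1)^k * DP k (2*T - t) = DP k t"
      by (rule first_sym_pos[OF hD2 T2 ev m1 symT bcs DP])
    have "\<forall>j<n. DP (2*j+1) T = 0"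
    proof (rule par_odd_conv, intro allI impI)
      fix k assume k: "k < 2*n"
      have "(-1)^k * DP k (2*T - T) = DP k T" using sy[rule_format, of k T] k T by simp
      then show "(-1::real)^k * DP k T = DP k T" by simp
    qed
    moreover have "\<forall>j<n. DP (2*j) 0 = 0" using DP(2) unfolding bcD_def by auto
    ultimately have bc: "bcM2 n 0 T DP" unfolding bcM2_def by auto
    have s: "sol (2*n) a 0 T lD2 DP"
      by (rule sol_coeff[OF sol_restrict[OF DP(1)]]) (use resT T in auto)
    have "\<exists>t\<in>{0..T}. DP 0 t \<noteq> 0"
      by (rule nz_half[where q=T and D=DP and L="2*T", OF DP(3,4)]) (use sy[rule_format, of 0] n0 in auto)
    then obtain t where tt: "t \<in> {0..T}" "DP 0 t \<noteq> 0" by blast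
    show ?thesis using first_le[OF hM2 s bc tt(1) tt(2)] .
  qed

  have FM2: "sol (2*n) (reflect (2*T) (reflect T a)) 0 (4*T) lM2
     (\<lambda>k t. if t \<le> 2*T then (if t \<le> T then DM2 k t else (-1)^k * DM2 k (2*T - t))
            else - ((-1)^k * (if 4*T - t \<le> T then DM2 k (4*T - t) else (-1)^k * DM2 k (2*T - (4*T - t)))))"
  proof (rule ext_odd[OF EM2 ev m1 _ _ _ c1 c2F])
    show "0 \<le> 2*T" using T by simp
    show "4*T = 2*(2*T)" by simp
    show "\<forall>k<2*n. (if 2*T \<le> T then DM2 k (2*T) else (-1)^k * DM2 k (2*T - 2*T)) =
        - ((-1)^k * (if 2*T \<le> T then DM2 k (2*T) else (-1)^k * DM2 k (2*T - 2*T)))"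
      using T par_even[where n=n and D=DM2 and x=0, OF M20] by auto
  qed
  have P5: "lP4 < lM2"
  proof (rule first_lt[OF hP4 FM2])
    show "bcP n 0 (4*T) (\<lambda>k t. if t \<le> 2*T then (if t \<le> T then DM2 k t else (-1)^k * DM2 k (2*T - t))
            else - ((-1)^k * (if 4*T - t \<le> T then DM2 k (4*T - t) else (-1)^k * DM2 k (2*T - (4*T - t)))))"
      unfolding bcP_def using T par_even[where n=n and D=DM2 and x=0, OF M20] by auto
    show "tM2 \<in> {0..4*T}" "4*T - tM2 \<in> {0..4*T}" using DM2(3) T by auto
    show "(if tM2 \<le> 2*T then (if tM2 \<le> T then DM2 0 tM2 else (-1)^0 * DM2 0 (2*T - tM2))
            else - ((-1)^0 * (if 4*T - tM2 \<le> T then DM2 0 (4*T - tM2) else (-1)^0 * DM2 0 (2*T - (4*T - tM2))))) *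
          (if 4*T - tM2 \<le> 2*T then (if 4*T - tM2 \<le> T then DM2 0 (4*T - tM2) else (-1)^0 * DM2 0 (2*T - (4*T - tM2)))
            else - ((-1)^0 * (if 4*T - (4*T - tM2) \<le> T then DM2 0 (4*T - (4*T - tM2)) else (-1)^0 * DM2 0 (2*T - (4*T - (4*T - tM2)))))) < 0"
      using DM2(3,4) T sqpos[of "DM2 0 tM2"] by (simp add: mult_less_0_iff)
  qed

  have P6a: "lA2 \<le> lM1"
  proof (rule first_le[OF hA2 OM1])
    show "bcA n 0 (2*T) (\<lambda>k t. if t \<le> T then DM1 k t else - ((-1)^k * DM1 k (2*T - t)))"
      unfolding bcA_def using T par_odd[where n=n and D=DM1 and x=0, OF M10] by auto
    show "tM1 \<in> {0..2*T}" using DM1(3) T by auto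
    show "(if tM1 \<le> T then DM1 0 tM1 else - ((-1)^0 * DM1 0 (2*T - tM1))) \<noteq> 0" using DM1(3,4) by auto
  qed
  have P6b: "lA2 \<le> lM2"
  proof (rule first_le[OF hA2 EM2])
    show "bcA n 0 (2*T) (\<lambda>k t. if t \<le> T then DM2 k t else (-1)^k * DM2 k (2*T - t))"
      unfolding bcA_def using T par_even[where n=n and D=DM2 and x=0, OF M20] by auto
    show "tM2 \<in> {0..2*T}" using DM2(3) T by auto
    show "(if tM2 \<le> T then DM2 0 tM2 else (-1)^0 * DM2 0 (2*T - tM2)) \<noteq> 0" using DM2(3,4) by auto
  qed
  have P6c: "min lM1 lM2 \<le> lA2"
  proof -
    obtain DP tP where DP: "sol (2*n) (reflect T a) 0 (2*T) lA2 DP" "bcA n 0 (2*T) DP" "tP \<in> {0..2*T}" "DP 0 tP \<noteq> 0"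
      using first_obtain[OF hA2] by metis
    have bcs: "bcA n 0 (2*T) (\<lambda>k t. (-1)^k * D k (2*T - t))" if "bcA n 0 (2*T) D" for D
      using that unfolding bcA_def by auto
    obtain z where z: "z = 1 \<or> z = -1" and sy: "\<forall>k<2*n. \<forall>t\<in>{0..2*T}. (-1)^k * DP k (2*T - t) = z * DP k t"
      using first_sym[OF hA2 T2 ev m1 symT bcs DP(1-4)] by metis
    have s: "sol (2*n) a 0 T lA2 DP"
      by (rule sol_coeff[OF sol_restrict[OF DP(1)]]) (use resT T in auto)
    have "\<exists>t\<in>{0..T}. DP 0 t \<noteq> 0"
      by (rule nz_half[where q=T and D=DP and L="2*T", OF DP(3,4)]) (use sy[rule_format, of 0] z n0 in auto)
    then obtain t where t: "t \<in> {0..T}" "DP 0 t \<noteq> 0" by blast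
    have bcA0: "DP k 0 = - DP k (2*T)" if "k < 2*n" for k using DP(2) that unfolding bcA_def by auto
    show ?thesis
    proof (cases "z = 1")
      case True
      have "\<forall>j<n. DP (2*j+1) T = 0"
      proof (rule par_odd_conv, intro allI impI)
        fix k assume k: "k < 2*n"
        have "(-1)^k * DP k (2*T - T) = z * DP k T" using sy[rule_format, of k T] k T by simp
        then show "(-1::real)^k * DP k T = DP k T" using True by simp
      qed
      moreover have "\<forall>j<n. DP (2*j) 0 = 0"
      proof (rule par_even_conv, intro allI impI)
        fix k assume k: "k < 2*n"
        have "(-1)^k * DP k (2*T - 0) = z * DP k 0" using sy[rule_format, of k 0] k T by simp
        then show "(-1::real)^k * DP k 0 = - DP k 0" using True bcA0[OF k] by simp
      qed
      ultimately have bc: "bcM2 n 0 T DP" unfolding bcM2_def by auto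
      have "lM2 \<le> lA2" using first_le[OF hM2 s bc t] .
      then show ?thesis by simp
    next
      case False
      then have zm: "z = -1" using z by simp
      have "\<forall>j<n. DP (2*j) T = 0"
      proof (rule par_even_conv, intro allI impI)
        fix k assume k: "k < 2*n"
        have "(-1)^k * DP k (2*T - T) = z * DP k T" using sy[rule_format, of k T] k T by simp
        then show "(-1::real)^k * DP k T = - DP k T" using zm by simp
      qed
      moreover have "\<forall>j<n. DP (2*j+1) 0 = 0"
      proof (rule par_odd_conv, intro allI impI)
        fix k assume k: "k < 2*n"
        have "(-1)^k * DP k (2*T - 0) = z * DP k 0" using sy[rule_format, of k 0] k T by simp
        then show "(-1::real)^k * DP k 0 = DP k 0" using zm bcA0[OF k] by simp
      qed
      ultimately have bc: "bcM1 n 0 T DP" unfolding bcM1_def by auto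
      have "lM1 \<le> lA2" using first_le[OF hM1 s bc t] .
      then show ?thesis by simp
    qed
  qed

  show ?thesis using P1a P1b P1c P2a P2b P2c P3a P3b P4a P4b P4c P5 P6a P6b P6c by auto
qed



end
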